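(* Let $\lambda\in\mathbb{C}$ with $|\lambda|>1$, $f(z,w)=(\lambda z, zw(1+w))$ and $e(z,w)=(\lambda z, zw)$. There is a unique formal power series $\psi\in\mathbb{C}[[z,w]]$ with $\psi(0,0)=0$ such that $\Psi(z,w)=(z,w(1+\psi(z,w)))$ satisfies $\Psi\circ f=e\circ\Psi$; its coefficients of $z^nw$ are $\psi_{n,1}=\lambda^{n(n-1)/2}$, so $\psi$ is not convergent.
   Context: Formal maps are tuples of formal power series; convergence means the series has positive radius of convergence at $0$. *)

theory Defs
  imports "HOL-Analysis.Analysis" "HOL-Computational_Algebra.Formal_Power_Series"
begin

text \<open>Bivariate formal power series in C[[z,w]] are modelled as power series in z
  whose coefficients are power series in w: coeff2 F m k is the coefficient of z^m w^k.
  The ring operations of complex fps fps are exactly those of C[[z,w]].\<close>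

type_synonym fps2 = "complex fps fps"

definition coeff2 :: "fps2 \<Rightarrow> nat \<Rightarrow> nat \<Rightarrow> complex" where
  "coeff2 F m k = fps_nth (fps_nth F m) k"

definition Z2 :: fps2 where "Z2 = fps_X"
definition W2 :: fps2 where "W2 = fps_const fps_X"
definition C2 :: "complex \<Rightarrow> fps2" where "C2 c = fps_const (fps_const c)"

text \<open>Substitution F(G,H) of series G, H without constant term into F:
  the coefficient of z^a w^b only receives contributions from monomials z^m w^k
  with m + k \<le> a + b, so the sum below is the (finite) formal composition.\<close>

definition fps2_compose :: "fps2 \<Rightarrow> fps2 \<Rightarrow> fps2 \<Rightarrow> fps2" where
  "fps2_compose F G H =
     Abs_fps (\<lambda>a. Abs_fps (\<lambda>b.
        \<Sum>m\<le>a+b. \<Sum>k\<le>a+b. coeff2 F m k * coeff2 (G ^ m * H ^ k) a b))"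

definition map2_compose :: "fps2 \<times> fps2 \<Rightarrow> fps2 \<times> fps2 \<Rightarrow> fps2 \<times> fps2" where
  "map2_compose P Q = (fps2_compose (fst P) (fst Q) (snd Q), fps2_compose (snd P) (fst Q) (snd Q))"

definition fps2_convergent :: "fps2 \<Rightarrow> bool" where
  "fps2_convergent F \<longleftrightarrow>
     (\<exists>r>0. (\<lambda>(m,k). norm (coeff2 F m k) * r ^ m * r ^ k) summable_on (UNIV :: (nat \<times> nat) set))"

end

theory Submission
  imports Defs
begin

lemma c2_Z: "coeff2 Z2 m k = (if m = 1 \<and> k = 0 then 1 else 0)"
  by (simp add: coeff2_def Z2_def)
lemma c2_C: "coeff2 (C2 c * F) m k = c * coeff2 F m k"
  by (simp add: coeff2_def C2_def)
lemma c2_ZF: "coeff2 (Z2 * F) m k = (if m = 0 then 0 else coeff2 F (m-1) k)"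
  by (simp add: coeff2_def Z2_def)
lemma c2_WF: "coeff2 (W2 * F) m k = (if k = 0 then 0 else coeff2 F m (k-1))"
  by (simp add: coeff2_def W2_def)
lemma c2_W: "coeff2 W2 m k = (if m = 0 \<and> k = 1 then 1 else 0)"
  by (simp add: coeff2_def W2_def)
lemma c2_add: "coeff2 (F + G) m k = coeff2 F m k + coeff2 G m k"
  by (simp add: coeff2_def)
lemma c2_one: "coeff2 1 m k = (if m = 0 \<and> k = 0 then 1 else 0)"
  by (simp add: coeff2_def)
lemma c2_Zpow: "coeff2 (Z2 ^ n * fps_const p) a b = (if a = n then fps_nth p b else 0)"
  by (simp add: coeff2_def Z2_def fps_X_power_mult_nth)

lemma c2_compose: "coeff2 (fps2_compose F G H) a b =
   (\<Sum>m\<le>a+b. \<Sum>k\<le>a+b. coeff2 F m k * coeff2 (G ^ m * H ^ k) a b)"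
  by (simp add: fps2_compose_def coeff2_def)

lemma c2_compose_single:
  assumes "\<And>m k. coeff2 F m k = (if m = m0 \<and> k = k0 then c else 0)"
  shows "coeff2 (fps2_compose F G H) a b =
     (if m0 \<le> a+b \<and> k0 \<le> a+b then c * coeff2 (G ^ m0 * H ^ k0) a b else 0)"
proof -
  have "coeff2 F m k * coeff2 (G ^ m * H ^ k) a b
     = (if m = m0 then (if k = k0 then c * coeff2 (G ^ m0 * H ^ k0) a b else 0) else 0)" for m k
    by (simp add: assms)
  then have "coeff2 (fps2_compose F G H) a b = (\<Sum>m\<le>a+b. if m = m0 then (\<Sum>k\<le>a+b. if k = k0 then c * coeff2 (G ^ m0 * H ^ k0) a b else 0) else 0)"
    unfolding c2_compose by (intro sum.cong refl) auto
  then show ?thesis by (simp add: sum.delta)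
qed

lemma GH: "(C2 lam * Z2)^m * (Z2 * W2 * (1 + W2))^k
   = C2 (lam^m) * (Z2^(m+k) * fps_const (fps_X^k * (1+fps_X)^k))"
proof -
  have "1 + W2 = fps_const (1 + fps_X)" by (simp add: W2_def flip: fps_const_add)
  hence "(Z2 * W2 * (1 + W2))^k = Z2^k * (fps_const fps_X ^ k * fps_const (1 + fps_X) ^ k)"
    unfolding W2_def[symmetric] by (simp only: power_mult_distrib mult.assoc W2_def)
  also have "\<dots> = Z2^k * fps_const (fps_X^k * (1+fps_X)^k)"
    by (simp only: fps_const_power fps_const_mult)
  finally have "(Z2 * W2 * (1 + W2))^k = Z2^k * fps_const (fps_X^k * (1+fps_X)^k)" .
  moreover have "(C2 lam * Z2)^m = C2 (lam^m) * Z2^m"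
    by (simp add: C2_def power_mult_distrib)
  ultimately show ?thesis by (simp add: power_add algebra_simps)
qed

definition cc :: "nat \<Rightarrow> nat \<Rightarrow> complex" where
  "cc k b = fps_nth (fps_X^k * (1+fps_X)^k :: complex fps) b"

lemma c2_LHS: "coeff2 (fps2_compose F (C2 lam * Z2) (Z2 * W2 * (1 + W2))) a b =
   (\<Sum>k\<le>a. coeff2 F (a-k) k * lam^(a-k) * cc k b)"
proof -
  have e: "coeff2 ((C2 lam * Z2)^m * (Z2 * W2 * (1 + W2))^k) a b
        = (if k \<le> a \<and> m = a - k then lam^m * cc k b else 0)" for m k
    unfolding GH c2_C c2_Zpow cc_def by auto
  have "coeff2 (fps2_compose F (C2 lam * Z2) (Z2 * W2 * (1 + W2))) a b
     = (\<Sum>k\<le>a+b. \<Sum>m\<le>a+b. (if k \<le> a \<and> m = a - k then coeff2 F m k * (lam^m * cc k b) else 0))"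
    unfolding c2_compose e by (subst sum.swap) (simp add: if_distrib cong: if_cong)
  also have "\<dots> = (\<Sum>k\<le>a+b. (if k \<le> a then coeff2 F (a-k) k * (lam^(a-k) * cc k b) else 0))"
    by (intro sum.cong refl) (auto simp: sum.delta)
  also have "\<dots> = (\<Sum>k\<le>a. coeff2 F (a-k) k * lam^(a-k) * cc k b)"
  proof -
    have "{..a} = {..a+b} \<inter> {k. k \<le> a}" by auto
    thus ?thesis by (simp add: sum.inter_restrict mult.assoc)
  qed
  finally show ?thesis .
qed

lemma fps2_eq: "(\<And>a b. coeff2 F a b = coeff2 G a b) \<Longrightarrow> F = G"
  unfolding coeff2_def by (intro fps_ext) auto

lemma cc_0: "cc k 0 = (if k = 0 then 1 else 0)"
  by (simp add: cc_def fps_X_power_mult_nth fps_power_zeroth)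
lemma cc_1: "cc (Suc j) (Suc 0) = (if j = 0 then 1 else 0)"
  by (simp add: cc_def fps_X_power_mult_nth fps_power_zeroth)
lemma cc_2: "cc (Suc j) 2 = (if j \<le> 1 then 1 else 0)"
proof -
  consider "j = 0" | "j = 1" | "j \<ge> 2" by linarith
  thus ?thesis
  proof cases
    case 1 thus ?thesis by (simp add: cc_def fps_X_power_mult_nth)
  next
    case 2
    have "cc 2 2 = 1" unfolding cc_def by (subst fps_X_power_mult_nth) (simp add: fps_power_zeroth)
    thus ?thesis using 2 by (simp add: numeral_2_eq_2)
  next
    case 3 thus ?thesis unfolding cc_def by (subst fps_X_power_mult_nth) simp
  qed
qed
lemma cc_B: "cc (Suc 0) (Suc B) = (if B \<le> 1 then 1 else 0)"
  by (cases B) (auto simp: cc_def fps_X_power_mult_nth)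

lemma c2_W1: "coeff2 (W2 * (1 + \<psi>)) m k =
   (if k = 0 then 0 else (if m = 0 \<and> k = 1 then 1 else 0) + coeff2 \<psi> m (k-1))"
  by (simp add: c2_WF c2_add c2_one)

definition EQ :: "complex \<Rightarrow> fps2 \<Rightarrow> bool" where
  "EQ lam \<psi> \<longleftrightarrow> map2_compose (Z2, W2 * (1 + \<psi>)) (C2 lam * Z2, Z2 * W2 * (1 + W2))
      = map2_compose (C2 lam * Z2, Z2 * W2) (Z2, W2 * (1 + \<psi>))"

definition Erec :: "complex \<Rightarrow> fps2 \<Rightarrow> nat \<Rightarrow> nat \<Rightarrow> bool" where
  "Erec lam \<psi> A B \<longleftrightarrow> coeff2 \<psi> A B + (if A = 0 \<and> B = 0 then 1 else 0) =
     (\<Sum>j\<le>A. ((if A = 0 \<and> j = 0 then 1 else 0) + coeff2 \<psi> (A-j) j) * lam^(A-j) * cc (Suc j) (Suc B))"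

lemma first_comp: "fps2_compose Z2 (C2 lam * Z2) (Z2 * W2 * (1 + W2))
   = fps2_compose (C2 lam * Z2) Z2 K"
proof (rule fps2_eq)
  fix a b
  have "coeff2 (C2 lam * Z2) m k = (if m = 1 \<and> k = 0 then lam else 0)" for m k
    by (simp add: c2_C c2_Z)
  note r = c2_compose_single[OF this]
  have "(\<Sum>k\<le>a. coeff2 Z2 (a-k) k * lam^(a-k) * cc k b)
      = (\<Sum>k\<le>a. if k = 0 then (if a = 1 then lam * cc 0 b else 0) else 0)"
    by (intro sum.cong refl) (auto simp: c2_Z)
  also have "\<dots> = (if a = 1 \<and> b = 0 then lam else 0)" by (simp add: cc_def)
  finally show "coeff2 (fps2_compose Z2 (C2 lam * Z2) (Z2 * W2 * (1 + W2))) a b =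
         coeff2 (fps2_compose (C2 lam * Z2) Z2 K) a b"
    unfolding c2_LHS r by (auto simp: c2_Z cc_def)
qed

lemma second_comp: "coeff2 (fps2_compose (Z2 * W2) Z2 K) a b = coeff2 (Z2 * K) a b"
proof -
  have "coeff2 (Z2 * W2) m k = (if m = 1 \<and> k = 1 then 1 else 0)" for m k
    by (simp add: c2_ZF c2_W)
  note r = c2_compose_single[OF this]
  show ?thesis unfolding r by (auto simp: c2_ZF)
qed

lemma EQ_iff_Q: "EQ lam \<psi> \<longleftrightarrow> (\<forall>a b. (\<Sum>k\<le>a. coeff2 (W2 * (1 + \<psi>)) (a-k) k * lam^(a-k) * cc k b)
    = coeff2 (Z2 * (W2 * (1 + \<psi>))) a b)"
proof -
  have "EQ lam \<psi> \<longleftrightarrow> fps2_compose (W2 * (1 + \<psi>)) (C2 lam * Z2) (Z2 * W2 * (1 + W2))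
        = fps2_compose (Z2 * W2) Z2 (W2 * (1 + \<psi>))"
    unfolding EQ_def map2_compose_def using first_comp by auto
  also have "\<dots> \<longleftrightarrow> (\<forall>a b. coeff2 (fps2_compose (W2 * (1 + \<psi>)) (C2 lam * Z2) (Z2 * W2 * (1 + W2))) a b
        = coeff2 (fps2_compose (Z2 * W2) Z2 (W2 * (1 + \<psi>))) a b)"
    using fps2_eq by metis
  finally show ?thesis unfolding c2_LHS second_comp .
qed

lemma EQ_iff_E: "EQ lam \<psi> \<longleftrightarrow> (\<forall>A B. Erec lam \<psi> A B)"
proof -
  define Q where "Q a b \<longleftrightarrow> (\<Sum>k\<le>a. coeff2 (W2 * (1 + \<psi>)) (a-k) k * lam^(a-k) * cc k b)
    = coeff2 (Z2 * (W2 * (1 + \<psi>))) a b" for a b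
  have Q0: "Q 0 b" for b unfolding Q_def by (simp add: c2_W1 c2_ZF)
  have Q1: "Q (Suc A) 0" for A unfolding Q_def
    by (auto simp: c2_W1 c2_ZF cc_0 intro!: sum.neutral)
  have Q2: "Q (Suc A) (Suc B) \<longleftrightarrow> Erec lam \<psi> A B" for A B
  proof -
    have "(\<Sum>k\<le>Suc A. coeff2 (W2 * (1 + \<psi>)) (Suc A-k) k * lam^(Suc A-k) * cc k (Suc B))
      = (\<Sum>j\<le>A. ((if A = 0 \<and> j = 0 then 1 else 0) + coeff2 \<psi> (A-j) j) * lam^(A-j) * cc (Suc j) (Suc B))"
      unfolding sum.atMost_Suc_shift by (auto simp: c2_W1 intro!: sum.cong)
    thus ?thesis unfolding Q_def Erec_def by (auto simp: c2_ZF c2_W1 add.commute)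
  qed
  have "(\<forall>a b. Q a b) \<longleftrightarrow> (\<forall>A B. Erec lam \<psi> A B)"
  proof
    assume "\<forall>a b. Q a b" thus "\<forall>A B. Erec lam \<psi> A B" using Q2 by blast
  next
    assume H: "\<forall>A B. Erec lam \<psi> A B"
    show "\<forall>a b. Q a b"
    proof (intro allI)
      fix a b show "Q a b" using Q0 Q1 Q2 H by (cases a; cases b) auto
    qed
  qed
  thus ?thesis unfolding EQ_iff_Q Q_def .
qed

function sr :: "complex \<Rightarrow> nat \<Rightarrow> nat \<Rightarrow> complex" where
  "sr lam A B = (if A = 0 then (if B = 1 then 1 else 0)
     else (\<Sum>j\<in>{1..A}. sr lam (A-j) j * lam^(A-j) * cc (Suc j) (Suc B)))"
  by auto
termination by (relation "Wellfounded.measure (\<lambda>(l,A,B). A)") auto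

declare sr.simps[simp del]

lemma split0: "(\<Sum>j\<le>A. g j) = g 0 + (\<Sum>j\<in>{1..A}. g j)" for g :: "nat \<Rightarrow> complex"
proof -
  have "{..A} = insert 0 {1..A}" by auto
  thus ?thesis by simp
qed

lemma sr_A0: "A > 0 \<Longrightarrow> sr lam A 0 = 0"
  by (subst sr.simps) (auto simp: cc_1 intro!: sum.neutral)

definition PS :: "complex \<Rightarrow> fps2" where
  "PS lam = Abs_fps (\<lambda>A. Abs_fps (\<lambda>B. sr lam A B))"

lemma c2_PS: "coeff2 (PS lam) A B = sr lam A B"
  by (simp add: PS_def coeff2_def)

lemma PS_E: "Erec lam (PS lam) A B"
proof (cases "A = 0")
  case True
  thus ?thesis unfolding Erec_def c2_PS by (simp add: sr.simps cc_B)
next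
  case False
  have "(\<Sum>j\<le>A. ((if A = 0 \<and> j = 0 then 1 else 0) + sr lam (A-j) j) * lam^(A-j) * cc (Suc j) (Suc B))
      = (\<Sum>j\<le>A. sr lam (A-j) j * lam^(A-j) * cc (Suc j) (Suc B))"
    using False by simp
  also have "\<dots> = (\<Sum>j\<in>{1..A}. sr lam (A-j) j * lam^(A-j) * cc (Suc j) (Suc B))"
    unfolding split0 using False by (simp add: sr_A0)
  also have "\<dots> = sr lam A B" using False by (subst (2) sr.simps) simp
  finally show ?thesis unfolding Erec_def c2_PS using False by simp
qed

lemma uniq:
  assumes lam: "norm lam > 1" and E: "\<forall>A B. Erec lam \<psi> A B" and z: "coeff2 \<psi> 0 0 = 0"
  shows "coeff2 \<psi> A B = sr lam A B"
proof (induction A arbitrary: B rule: less_induct)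
  case (less A)
  show ?case
  proof (cases "A = 0")
    case True
    have "Erec lam \<psi> 0 B" using E by blast
    thus ?thesis using True z unfolding Erec_def by (cases B) (auto simp: sr.simps cc_B split: if_splits)
  next
    case False
    have e0: "Erec lam \<psi> A 0" using E by blast
    have "coeff2 \<psi> A 0 = coeff2 \<psi> A 0 * lam ^ A"
      using e0 False unfolding Erec_def split0 by (simp add: cc_1)
    moreover have "lam ^ A \<noteq> 1"
    proof
      assume "lam ^ A = 1"
      hence "norm lam ^ A = 1" by (metis norm_one norm_power)
      moreover have "norm lam ^ A > 1" using lam False by simp
      ultimately show False by simp
    qed
    ultimately have a0: "coeff2 \<psi> A 0 = 0"
      by (metis mult.right_neutral mult_left_cancel)
    have eB: "Erec lam \<psi> A B" using E by blast
    have "coeff2 \<psi> A B = (\<Sum>j\<in>{1..A}. coeff2 \<psi> (A-j) j * lam^(A-j) * cc (Suc j) (Suc B))"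
      using eB False a0 unfolding Erec_def split0 by simp
    also have "\<dots> = (\<Sum>j\<in>{1..A}. sr lam (A-j) j * lam^(A-j) * cc (Suc j) (Suc B))"
      using less False by (intro sum.cong refl) auto
    also have "\<dots> = sr lam A B" using False by (subst (2) sr.simps) simp
    finally show ?thesis .
  qed
qed

lemma sr_1: "sr lam n 1 = lam ^ (n * (n - 1) div 2)"
proof (induction n)
  case 0 thus ?case by (simp add: sr.simps)
next
  case (Suc n)
  have "sr lam (Suc n) 1 = (\<Sum>j\<in>{1..Suc n}. sr lam (Suc n - j) j * lam^(Suc n - j) * cc (Suc j) 2)"
    by (subst sr.simps) (simp add: numeral_2_eq_2)
  also have "\<dots> = (\<Sum>j\<in>{1..Suc n}. if j = 1 then sr lam n 1 * lam ^ n else 0)"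
    by (intro sum.cong refl) (auto simp: cc_2)
  also have "\<dots> = sr lam n 1 * lam ^ n" by simp
  also have "\<dots> = lam ^ (n * (n - 1) div 2) * lam ^ n" using Suc.IH by simp
  also have "\<dots> = lam ^ (n * (n - 1) div 2 + n)" by (simp add: power_add)
  also have "n * (n - 1) div 2 + n = Suc n * (Suc n - 1) div 2"
  proof -
    have "Suc n * (Suc n - 1) = n * (n - 1) + 2 * n" by (cases n) (auto simp: algebra_simps)
    thus ?thesis by simp
  qed
  finally show ?case .
qed

lemma not_conv:
  assumes lam: "norm lam > 1" and v: "\<forall>n. coeff2 \<psi> n 1 = lam ^ (n * (n - 1) div 2)"
  shows "\<not> fps2_convergent \<psi>"
proof
  assume "fps2_convergent \<psi>"
  then obtain r :: real where r: "r > 0"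
    and S: "(\<lambda>(m,k). norm (coeff2 \<psi> m k) * r ^ m * r ^ k) summable_on (UNIV :: (nat \<times> nat) set)"
    unfolding fps2_convergent_def by blast
  define g where "g = (\<lambda>(m,k). norm (coeff2 \<psi> m k) * r ^ m * r ^ k)"
  define q where "q = norm lam"
  have q1: "q > 1" using lam q_def by simp
  have "g summable_on range (\<lambda>n. (n, 1::nat))"
    using summable_on_subset_banach[OF S[folded g_def]] by blast
  hence "(g \<circ> (\<lambda>n. (n, 1::nat))) summable_on UNIV"
    by (subst (asm) summable_on_reindex) (auto simp: inj_on_def)
  moreover have "(g \<circ> (\<lambda>n. (n, 1::nat))) = (\<lambda>n. q ^ (n * (n - 1) div 2) * r ^ n * r)"
    using v by (auto simp: g_def q_def norm_power fun_eq_iff)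
  ultimately have "summable (\<lambda>n. q ^ (n * (n - 1) div 2) * r ^ n * r)"
    by (auto dest: summable_on_imp_summable)
  hence "(\<lambda>n. q ^ (n * (n - 1) div 2) * r ^ n * r) \<longlonglongrightarrow> 0"
    by (rule summable_LIMSEQ_zero)
  hence ev: "eventually (\<lambda>n. q ^ (n * (n - 1) div 2) * r ^ n * r < r) sequentially"
    using r by (rule order_tendstoD(2))
  obtain N where N: "1 / r < q ^ N" using real_arch_pow[OF q1] by blast
  have qNr: "q ^ N * r \<ge> 1" using N r by (simp add: field_simps)
  have ge: "q ^ (n * (n - 1) div 2) * r ^ n * r \<ge> r" if n: "n \<ge> 2 * N + 1" for n
  proof -
    have h: "2 * N \<le> n - 1" using n by simp
    have "(2 * N) * n \<le> (n - 1) * n" using h by (rule mult_right_mono) simp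
    hence "2 * (N * n) \<le> n * (n - 1)" by (metis mult.assoc mult.commute)
    hence "N * n \<le> n * (n - 1) div 2" by linarith
    hence "q ^ (N * n) \<le> q ^ (n * (n - 1) div 2)" using q1 by (intro power_increasing) auto
    moreover have "1 \<le> (q ^ N * r) ^ n" using qNr by (simp add: one_le_power)
    moreover have "(q ^ N * r) ^ n = q ^ (N * n) * r ^ n" by (simp add: power_mult power_mult_distrib)
    ultimately have "1 \<le> q ^ (n * (n - 1) div 2) * r ^ n"
      using r by (smt (verit) mult_right_mono zero_le_power)
    thus ?thesis using r by (metis mult_right_mono mult_1 less_imp_le)
  qed
  from ev obtain M where "\<forall>n\<ge>M. q ^ (n * (n - 1) div 2) * r ^ n * r < r"
    unfolding eventually_sequentially by blast
  hence "q ^ (m * (m - 1) div 2) * r ^ m * r < r" if "m = max M (2*N+1)" for m using that by auto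
  with ge[of "max M (2*N+1)"] show False by force
qed

theorem mainTheorem14:
  fixes lam :: complex
  assumes "norm lam > 1"
  defines "f \<equiv> (C2 lam * Z2, Z2 * W2 * (1 + W2))"
      and "e \<equiv> (C2 lam * Z2, Z2 * W2)"
  shows "(\<exists>!\<psi> :: fps2. coeff2 \<psi> 0 0 = 0 \<and>
            map2_compose (Z2, W2 * (1 + \<psi>)) f = map2_compose e (Z2, W2 * (1 + \<psi>)))
       \<and> (\<forall>\<psi> :: fps2. coeff2 \<psi> 0 0 = 0 \<and>
            map2_compose (Z2, W2 * (1 + \<psi>)) f = map2_compose e (Z2, W2 * (1 + \<psi>))
            \<longrightarrow> (\<forall>n. coeff2 \<psi> n 1 = lam ^ (n * (n - 1) div 2)) \<and> \<not> fps2_convergent \<psi>)"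
proof -
  have iff: "(map2_compose (Z2, W2 * (1 + \<psi>)) f = map2_compose e (Z2, W2 * (1 + \<psi>)))
     \<longleftrightarrow> (\<forall>A B. Erec lam \<psi> A B)" for \<psi>
    unfolding f_def e_def EQ_iff_E[symmetric] EQ_def ..
  have sol: "\<psi> = PS lam" if "coeff2 \<psi> 0 0 = 0" "\<forall>A B. Erec lam \<psi> A B" for \<psi>
    by (rule fps2_eq) (simp add: c2_PS uniq[OF assms(1) that(2) that(1)])
  have ex: "coeff2 (PS lam) 0 0 = 0 \<and> (\<forall>A B. Erec lam (PS lam) A B)"
    by (simp add: c2_PS sr.simps PS_E)
  show ?thesis
  proof (rule conjI)
    show "\<exists>!\<psi> :: fps2. coeff2 \<psi> 0 0 = 0 \<and>
            map2_compose (Z2, W2 * (1 + \<psi>)) f = map2_compose e (Z2, W2 * (1 + \<psi>))"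
      unfolding iff using ex sol by blast
  next
    show "\<forall>\<psi> :: fps2. coeff2 \<psi> 0 0 = 0 \<and>
            map2_compose (Z2, W2 * (1 + \<psi>)) f = map2_compose e (Z2, W2 * (1 + \<psi>))
            \<longrightarrow> (\<forall>n. coeff2 \<psi> n 1 = lam ^ (n * (n - 1) div 2)) \<and> \<not> fps2_convergent \<psi>"
    proof (intro allI impI)
    fix \<psi> assume H: "coeff2 \<psi> 0 0 = 0 \<and>
            map2_compose (Z2, W2 * (1 + \<psi>)) f = map2_compose e (Z2, W2 * (1 + \<psi>))"
    hence "\<psi> = PS lam" using sol iff by metis
    hence v: "\<forall>n. coeff2 \<psi> n 1 = lam ^ (n * (n - 1) div 2)" using sr_1 by (simp add: c2_PS)
    thus "(\<forall>n. coeff2 \<psi> n 1 = lam ^ (n * (n - 1) div 2)) \<and> \<not> fps2_convergent \<psi>"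
      using not_conv[OF assms(1) v] by (rule conjI)
    qed
  qed
qed

end
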